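(* Let $u:\Sigma\to M$ be a smooth $(j,J)$-holomorphic map and $z_0\in\Sigma$ with $j^ku(z_0)=0$. Then $j^{k+1}u(z_0)=0$ if and only if $\sigma^{k+1}(J,(j,u),z_0)=0$.
   Context: $(M,J)$ almost complex of real dimension $2n$, $(\Sigma,j)$ a Riemann surface; $u$ is $(j,J)$-holomorphic if $J\circ du=du\circ j$. $j^ku(z)=0$ means all derivatives of $u$ of orders $1,\dots,k$ vanish at $z$; then $d^{k+1}u(z)$ is a well-defined symmetric $(k+1)$-linear map $T_z\Sigma\to T_{u(z)}M$. The space of symmetric $\ell$-linear maps $T_z\Sigma\to T_xM$ splits relative to $(j_z,J_x)$ into the holomorphic part $H^{(\ell,0)}_{(z,x)}$ (complex multilinear maps), the antiholomorphic part and mixed parts; $\pi^{hol}$ is the projection to $H^{(\ell,0)}$. The principal holomorphic jet is $\sigma^{k+1}(J,(j,u),z_0):=\pi^{hol}(d^{k+1}u(z_0))$. *)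

theory Defs
  imports "HOL-Analysis.Analysis"
begin

text \<open>The Riemann surface is an open set U of the
complex plane, carrying an almost complex structure j (a field of real-linear
maps with j z (j z v) = - v); the almost complex manifold is an open set W of a
Euclidean space 'm carrying an almost complex structure J.\<close>

text \<open>Higher derivative d^l f(x) as a real l-linear map, evaluated on a list of
l direction vectors (iterated Frechet derivatives).\<close>
fun hderiv :: "nat \<Rightarrow> ('a::real_normed_vector \<Rightarrow> 'b::real_normed_vector) \<Rightarrow> 'a \<Rightarrow> 'a list \<Rightarrow> 'b" where
  "hderiv 0 f x vs = f x"
| "hderiv (Suc l) f x [] = 0"
| "hderiv (Suc l) f x (v # vs) = frechet_derivative (\<lambda>y. hderiv l f y vs) (at x) v"

definition smooth_on :: "'a::real_normed_vector set \<Rightarrow> ('a \<Rightarrow> 'b::real_normed_vector) \<Rightarrow> bool" where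
  "smooth_on S f \<longleftrightarrow> (\<forall>l vs. length vs = l \<longrightarrow> (\<lambda>y. hderiv l f y vs) differentiable_on S)"

definition almost_complex_structure :: "'a set \<Rightarrow> ('a::real_normed_vector \<Rightarrow> 'a \<Rightarrow> 'a) \<Rightarrow> bool" where
  "almost_complex_structure S J \<longleftrightarrow>
     (\<forall>x\<in>S. linear (J x) \<and> (\<forall>v. J x (J x v) = - v)) \<and> (\<forall>v. smooth_on S (\<lambda>x. J x v))"

definition jJ_holomorphic :: "complex set \<Rightarrow> (complex \<Rightarrow> complex \<Rightarrow> complex) \<Rightarrow>
    ('m::real_normed_vector \<Rightarrow> 'm \<Rightarrow> 'm) \<Rightarrow> (complex \<Rightarrow> 'm) \<Rightarrow> bool" where
  "jJ_holomorphic U j J u \<longleftrightarrow>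
     (\<forall>z\<in>U. \<forall>v. J (u z) (frechet_derivative u (at z) v) = frechet_derivative u (at z) (j z v))"

definition jet_vanishes :: "nat \<Rightarrow> (complex \<Rightarrow> 'm::real_normed_vector) \<Rightarrow> complex \<Rightarrow> bool" where
  "jet_vanishes k u z \<longleftrightarrow> (\<forall>l\<in>{1..k}. \<forall>vs. length vs = l \<longrightarrow> hderiv l u z vs = 0)"

text \<open>Projection onto maps complex-linear in slot i (w.r.t. jz on the source,
Jx on the target): A |-> 1/2 (A - Jx o A o (jz in slot i)).\<close>
definition slot_proj :: "('m::real_vector \<Rightarrow> 'm) \<Rightarrow> ('a \<Rightarrow> 'a) \<Rightarrow> nat \<Rightarrow> ('a list \<Rightarrow> 'm) \<Rightarrow> 'a list \<Rightarrow> 'm" where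
  "slot_proj Jx jz i A vs = (1/2) *\<^sub>R (A vs - Jx (A (vs[i := jz (vs ! i)])))"

fun pihol_aux :: "('m::real_vector \<Rightarrow> 'm) \<Rightarrow> ('a \<Rightarrow> 'a) \<Rightarrow> nat \<Rightarrow> ('a list \<Rightarrow> 'm) \<Rightarrow> 'a list \<Rightarrow> 'm" where
  "pihol_aux Jx jz 0 A = A"
| "pihol_aux Jx jz (Suc i) A = slot_proj Jx jz i (pihol_aux Jx jz i A)"

text \<open>pi^hol on l-linear maps: projection onto H^(l,0) (complex multilinear part).\<close>
definition pi_hol :: "('m::real_vector \<Rightarrow> 'm) \<Rightarrow> ('a \<Rightarrow> 'a) \<Rightarrow> nat \<Rightarrow> ('a list \<Rightarrow> 'm) \<Rightarrow> 'a list \<Rightarrow> 'm" where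
  "pi_hol Jx jz l A = pihol_aux Jx jz l A"

definition principal_hol_jet :: "nat \<Rightarrow> ('m::real_normed_vector \<Rightarrow> 'm \<Rightarrow> 'm) \<Rightarrow>
    (complex \<Rightarrow> complex \<Rightarrow> complex) \<Rightarrow> (complex \<Rightarrow> 'm) \<Rightarrow> complex \<Rightarrow> complex list \<Rightarrow> 'm" where
  "principal_hol_jet l J j u z0 = pi_hol (J (u z0)) (j z0) l (hderiv l u z0)"

end

theory Submission
  imports Defs
begin


abbreviation dd :: "('a::real_normed_vector \<Rightarrow> 'b::real_normed_vector) \<Rightarrow> 'a \<Rightarrow> 'a \<Rightarrow> 'b" where
  "dd f v \<equiv> (\<lambda>y. frechet_derivative f (at y) v)"

definition Cn :: "nat \<Rightarrow> 'a::real_normed_vector set \<Rightarrow> ('a \<Rightarrow> 'b::real_normed_vector) \<Rightarrow> bool" where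
  "Cn n S f \<longleftrightarrow> (\<forall>l\<le>n. \<forall>vs::'a list. length vs = l \<longrightarrow> (\<lambda>y. hderiv l f y vs) differentiable_on S)"

lemma fd_cong:
  assumes "open S" "x \<in> S" "\<And>y. y \<in> S \<Longrightarrow> f y = g y"
  shows "frechet_derivative f (at x) = frechet_derivative g (at x)"
proof -
  have "(\<lambda>f'. (f has_derivative f') (at x)) = (\<lambda>f'. (g has_derivative f') (at x))"
    using assms has_derivative_transform_within_open by (metis (no_types, opaque_lifting))
  then show ?thesis unfolding frechet_derivative_def by simp
qed

lemma hderiv_cong:
  assumes "open S" "x \<in> S" "\<And>y. y \<in> S \<Longrightarrow> f y = g y"
  shows "hderiv l f x vs = hderiv l g x vs"
  using assms(2)
proof (induction l arbitrary: x vs)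
  case 0
  then show ?case using assms by simp
next
  case (Suc l)
  show ?case
  proof (cases vs)
    case Nil then show ?thesis by simp
  next
    case (Cons v ws)
    have "frechet_derivative (\<lambda>y. hderiv l f y ws) (at x) = frechet_derivative (\<lambda>y. hderiv l g y ws) (at x)"
      by (rule fd_cong[OF assms(1) Suc.prems]) (rule Suc.IH)
    then show ?thesis using Cons by simp
  qed
qed

lemma hderiv_snoc:
  "length vs = l \<Longrightarrow> hderiv (Suc l) f x (vs @ [v]) = hderiv l (dd f v) x vs"
proof (induction vs arbitrary: l x)
  case Nil
  then show ?case by simp
next
  case (Cons a vs)
  then obtain l' where l: "l = Suc l'" "length vs = l'" by auto
  have "(\<lambda>y. hderiv (Suc l') f y (vs @ [v])) = (\<lambda>y. hderiv l' (dd f v) y vs)"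
    using Cons.IH l by auto
  then show ?case using l by simp
qed

lemma differentiable_on_cong_open:
  assumes "open S" "\<And>y. y \<in> S \<Longrightarrow> f y = g y" "f differentiable_on S"
  shows "g differentiable_on S"
  unfolding differentiable_on_eq_differentiable_at[OF assms(1)]
proof
  fix x assume x: "x \<in> S"
  then obtain f' where "(f has_derivative f') (at x)"
    using assms(3) unfolding differentiable_on_eq_differentiable_at[OF assms(1)] differentiable_def by blast
  then have "(g has_derivative f') (at x)"
    by (rule has_derivative_transform_within_open[OF _ assms(1) x assms(2)])
  then show "g differentiable at x" unfolding differentiable_def by blast
qed

lemma Cn_cong:
  fixes S :: "'a::real_normed_vector set"
  assumes "open S" "\<And>y. y \<in> S \<Longrightarrow> f y = g y" "Cn n S f"
  shows "Cn n S g"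
  unfolding Cn_def
proof (intro allI impI)
  fix l and vs :: "'a list" assume "l \<le> n" "length vs = l"
  then have "(\<lambda>y. hderiv l f y vs) differentiable_on S" using assms(3) unfolding Cn_def by blast
  moreover have "hderiv l f y vs = hderiv l g y vs" if "y \<in> S" for y
    by (rule hderiv_cong[OF assms(1) that]) (rule assms(2))
  ultimately show "(\<lambda>y. hderiv l g y vs) differentiable_on S"
    by (rule differentiable_on_cong_open[OF assms(1), rotated])
qed

lemma Cn_0: "Cn 0 S f \<longleftrightarrow> f differentiable_on S"
  unfolding Cn_def by simp

lemma Cn_Suc:
  fixes S :: "'a::real_normed_vector set"
  shows "Cn (Suc n) S f \<longleftrightarrow> f differentiable_on S \<and> (\<forall>v. Cn n S (dd f v))"
proof
  assume A: "Cn (Suc n) S f"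
  have "(\<lambda>y. hderiv 0 f y []) differentiable_on S" using A unfolding Cn_def
    by (metis le0 list.size(3))
  then have "f differentiable_on S" by simp
  moreover have "Cn n S (dd f v)" for v
    unfolding Cn_def
  proof (intro allI impI)
    fix l and vs :: "'a list" assume "l \<le> n" "length vs = l"
    then have "(\<lambda>y. hderiv (Suc l) f y (vs @ [v])) differentiable_on S" using A unfolding Cn_def by auto
    moreover have "(\<lambda>y. hderiv (Suc l) f y (vs @ [v])) = (\<lambda>y. hderiv l (dd f v) y vs)"
      using hderiv_snoc[OF \<open>length vs = l\<close>] by blast
    ultimately show "(\<lambda>y. hderiv l (dd f v) y vs) differentiable_on S" by simp
  qed
  ultimately show "f differentiable_on S \<and> (\<forall>v. Cn n S (dd f v))" by blast
next
  assume B: "f differentiable_on S \<and> (\<forall>v. Cn n S (dd f v))"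
  show "Cn (Suc n) S f"
    unfolding Cn_def
  proof (intro allI impI)
    fix l and vs :: "'a list" assume l: "l \<le> Suc n" "length vs = l"
    show "(\<lambda>y. hderiv l f y vs) differentiable_on S"
    proof (cases l)
      case 0 then show ?thesis using B l by simp
    next
      case (Suc l')
      then obtain ws v where vs: "vs = ws @ [v]" using l by (metis length_Suc_conv_rev)
      have "length ws = l'" using vs l Suc by simp
      moreover have "Cn n S (dd f v)" using B by blast
      ultimately have "(\<lambda>y. hderiv l' (dd f v) y ws) differentiable_on S"
        using Suc l unfolding Cn_def by auto
      moreover have "(\<lambda>y. hderiv (Suc l') f y (ws @ [v])) = (\<lambda>y. hderiv l' (dd f v) y ws)"
        using hderiv_snoc[OF \<open>length ws = l'\<close>] by blast
      ultimately show ?thesis using vs Suc by simp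
    qed
  qed
qed

lemma Cn_mono: "Cn n S f \<Longrightarrow> m \<le> n \<Longrightarrow> Cn m S f"
  unfolding Cn_def by auto

lemma smooth_Cn: "smooth_on S f \<longleftrightarrow> (\<forall>n. Cn n S f)"
  unfolding smooth_on_def Cn_def by auto

lemma smooth_dd: "smooth_on S f \<Longrightarrow> smooth_on S (dd f v)"
  unfolding smooth_Cn using Cn_Suc by blast

lemma smooth_diff: "smooth_on S f \<Longrightarrow> f differentiable_on S"
  unfolding smooth_Cn using Cn_0 by blast

lemma fd_at_open: "open S \<Longrightarrow> f differentiable_on S \<Longrightarrow> x \<in> S \<Longrightarrow> (f has_derivative frechet_derivative f (at x)) (at x)"
  using differentiable_on_eq_differentiable_at frechet_derivative_works by blast



lemma diff_open_at: "open S \<Longrightarrow> f differentiable_on S \<Longrightarrow> x \<in> S \<Longrightarrow> f differentiable at x"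
  using differentiable_on_eq_differentiable_at by blast

lemma Cn_at: "Cn l S f \<Longrightarrow> open S \<Longrightarrow> x \<in> S \<Longrightarrow> length vs = l \<Longrightarrow>
   ((\<lambda>y. hderiv l f y vs) has_derivative frechet_derivative (\<lambda>y. hderiv l f y vs) (at x)) (at x)"
  unfolding Cn_def using fd_at_open by blast

lemma hderiv_linear:
  fixes S :: "'a::real_normed_vector set" and f :: "'a \<Rightarrow> 'b::real_normed_vector"
    and T :: "'b \<Rightarrow> 'c::real_normed_vector"
  assumes T: "bounded_linear T" and S: "open S"
  shows "Cn l S f \<Longrightarrow> x \<in> S \<Longrightarrow> length vs = l \<Longrightarrow> hderiv l (\<lambda>y. T (f y)) x vs = T (hderiv l f x vs)"
proof (induction l arbitrary: x vs)
  case 0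
  show ?case by simp
next
  case (Suc l)
  then obtain v ws where vs: "vs = v # ws" "length ws = l" by (metis length_Suc_conv)
  have Cl: "Cn l S f" using Suc.prems Cn_mono by fastforce
  have "frechet_derivative (\<lambda>y. hderiv l (\<lambda>y. T (f y)) y ws) (at x)
      = frechet_derivative (\<lambda>y. T (hderiv l f y ws)) (at x)"
    by (rule fd_cong[OF S Suc.prems(2)]) (rule Suc.IH[OF Cl _ vs(2)])
  also have "\<dots> = (\<lambda>h. T (frechet_derivative (\<lambda>y. hderiv l f y ws) (at x) h))"
    by (rule frechet_derivative_at[OF bounded_linear.has_derivative[OF T Cn_at[OF Cl S Suc.prems(2) vs(2)]], symmetric])
  finally show ?case using vs by simp
qed

lemma Cn_linear:
  fixes S :: "'a::real_normed_vector set" and f :: "'a \<Rightarrow> 'b::real_normed_vector"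
    and T :: "'b \<Rightarrow> 'c::real_normed_vector"
  assumes T: "bounded_linear T" and S: "open S"
  shows "Cn n S f \<Longrightarrow> Cn n S (\<lambda>y. T (f y))"
proof (induction n arbitrary: f)
  case 0
  show ?case unfolding Cn_0 differentiable_on_eq_differentiable_at[OF S]
  proof
    fix x assume x: "x \<in> S"
    have "(f has_derivative frechet_derivative f (at x)) (at x)"
      using fd_at_open[OF S _ x] 0 Cn_0 by blast
    then show "(\<lambda>y. T (f y)) differentiable at x"
      using bounded_linear.has_derivative[OF T] differentiable_def by blast
  qed
next
  case (Suc n)
  have fd: "f differentiable_on S" and dv: "\<And>v. Cn n S (dd f v)" using Suc.prems Cn_Suc by blast+
  have "Cn n S f" using Suc.prems Cn_mono le_SucI by blast
  then have "Cn 0 S (\<lambda>y. T (f y))" using Suc.IH Cn_mono by blast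
  then have "(\<lambda>y. T (f y)) differentiable_on S" using Cn_0 by blast
  moreover have "Cn n S (dd (\<lambda>y. T (f y)) v)" for v
  proof (rule Cn_cong[OF S _ Suc.IH[OF dv[of v]]])
    fix y assume y: "y \<in> S"
    have D: "((\<lambda>y. T (f y)) has_derivative (\<lambda>h. T (frechet_derivative f (at y) h))) (at y)"
      using bounded_linear.has_derivative[OF T fd_at_open[OF S fd y]] .
    show "T (dd f v y) = dd (\<lambda>y. T (f y)) v y"
      by (subst frechet_derivative_at[OF D, symmetric]) simp
  qed
  ultimately show ?case using Cn_Suc by blast
qed

lemma hderiv_const: "hderiv (Suc l) (\<lambda>y. c) x vs = 0"
proof (induction l arbitrary: x vs)
  case 0
  show ?case by (cases vs) simp_all
next
  case (Suc l)
  show ?case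
  proof (cases vs)
    case Nil then show ?thesis by simp
  next
    case (Cons v ws)
    have "(\<lambda>y. hderiv (Suc l) (\<lambda>y. c) y ws) = (\<lambda>y. 0)" using Suc.IH by blast
    then show ?thesis using Cons by simp
  qed
qed

lemma hderiv_zero: "hderiv l (\<lambda>y. 0) x vs = 0"
  by (cases l) (auto simp: hderiv_const)

lemma Cn_const: "Cn n S (\<lambda>y. c)"
  unfolding Cn_def
proof (intro allI impI)
  fix l vs
  show "(\<lambda>y. hderiv l (\<lambda>y. c) y vs) differentiable_on S"
    by (cases l) (auto simp: hderiv_const)
qed

lemma hderiv_add:
  fixes S :: "'a::real_normed_vector set" and f g :: "'a \<Rightarrow> 'b::real_normed_vector"
  assumes S: "open S"
  shows "Cn l S f \<Longrightarrow> Cn l S g \<Longrightarrow> x \<in> S \<Longrightarrow> length vs = l \<Longrightarrow>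
     hderiv l (\<lambda>y. f y + g y) x vs = hderiv l f x vs + hderiv l g x vs"
proof (induction l arbitrary: x vs)
  case 0
  show ?case by simp
next
  case (Suc l)
  then obtain v ws where vs: "vs = v # ws" "length ws = l" by (metis length_Suc_conv)
  have Cf: "Cn l S f" and Cg: "Cn l S g" using Suc.prems Cn_mono by fastforce+
  have "frechet_derivative (\<lambda>y. hderiv l (\<lambda>y. f y + g y) y ws) (at x)
      = frechet_derivative (\<lambda>y. hderiv l f y ws + hderiv l g y ws) (at x)"
    by (rule fd_cong[OF S Suc.prems(3)]) (rule Suc.IH[OF Cf Cg _ vs(2)])
  also have "\<dots> = (\<lambda>h. frechet_derivative (\<lambda>y. hderiv l f y ws) (at x) h + frechet_derivative (\<lambda>y. hderiv l g y ws) (at x) h)"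
    by (rule frechet_derivative_at[OF has_derivative_add[OF Cn_at[OF Cf S Suc.prems(3) vs(2)] Cn_at[OF Cg S Suc.prems(3) vs(2)]], symmetric])
  finally show ?case using vs by simp
qed

lemma Cn_add:
  fixes S :: "'a::real_normed_vector set" and f g :: "'a \<Rightarrow> 'b::real_normed_vector"
  assumes S: "open S"
  shows "Cn n S f \<Longrightarrow> Cn n S g \<Longrightarrow> Cn n S (\<lambda>y. f y + g y)"
proof (induction n arbitrary: f g)
  case 0
  show ?case using 0 unfolding Cn_0 by (simp add: differentiable_on_add)
next
  case (Suc n)
  have fd: "f differentiable_on S" and df: "\<And>v. Cn n S (dd f v)" using Suc.prems Cn_Suc by blast+
  have gd: "g differentiable_on S" and dg: "\<And>v. Cn n S (dd g v)" using Suc.prems Cn_Suc by blast+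
  have "(\<lambda>y. f y + g y) differentiable_on S" using fd gd by (simp add: differentiable_on_add)
  moreover have "Cn n S (dd (\<lambda>y. f y + g y) v)" for v
  proof (rule Cn_cong[OF S _ Suc.IH[OF df[of v] dg[of v]]])
    fix y assume y: "y \<in> S"
    have D: "((\<lambda>y. f y + g y) has_derivative (\<lambda>h. frechet_derivative f (at y) h + frechet_derivative g (at y) h)) (at y)"
      using has_derivative_add[OF fd_at_open[OF S fd y] fd_at_open[OF S gd y]] .
    show "dd f v y + dd g v y = dd (\<lambda>y. f y + g y) v y"
      by (subst frechet_derivative_at[OF D, symmetric]) simp
  qed
  ultimately show ?case using Cn_Suc by blast
qed

lemma Cn_sum:
  fixes S :: "'a::real_normed_vector set" and f :: "'i \<Rightarrow> 'a \<Rightarrow> 'b::real_normed_vector"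
  assumes S: "open S" and I: "finite I"
  shows "(\<And>i. i \<in> I \<Longrightarrow> Cn n S (f i)) \<Longrightarrow> Cn n S (\<lambda>y. \<Sum>i\<in>I. f i y)"
  using I
proof (induction I rule: finite_induct)
  case empty
  show ?case using Cn_const by simp
next
  case (insert a I)
  then have "Cn n S (\<lambda>y. f a y + (\<Sum>i\<in>I. f i y))" using Cn_add[OF S] by blast
  then show ?case using insert by simp
qed

lemma hderiv_sum:
  fixes S :: "'a::real_normed_vector set" and f :: "'i \<Rightarrow> 'a \<Rightarrow> 'b::real_normed_vector"
  assumes S: "open S" and I: "finite I"
  shows "(\<And>i. i \<in> I \<Longrightarrow> Cn l S (f i)) \<Longrightarrow> x \<in> S \<Longrightarrow> length vs = l \<Longrightarrow>
     hderiv l (\<lambda>y. \<Sum>i\<in>I. f i y) x vs = (\<Sum>i\<in>I. hderiv l (f i) x vs)"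
  using I
proof (induction I rule: finite_induct)
  case empty
  show ?case by (simp add: hderiv_zero)
next
  case (insert a I)
  have C: "Cn l S (\<lambda>y. \<Sum>i\<in>I. f i y)" using Cn_sum[OF S insert(1)] insert by blast
  have "hderiv l (\<lambda>y. \<Sum>i\<in>insert a I. f i y) x vs = hderiv l (\<lambda>y. f a y + (\<Sum>i\<in>I. f i y)) x vs"
    using insert by simp
  also have "\<dots> = hderiv l (f a) x vs + hderiv l (\<lambda>y. \<Sum>i\<in>I. f i y) x vs"
    using hderiv_add[OF S _ C] insert by blast
  finally show ?case using insert by simp
qed

lemma dd_prod:
  assumes B: "bounded_bilinear B" and "f differentiable at y" "g differentiable at y"
  shows "frechet_derivative (\<lambda>y. B (f y) (g y)) (at y) v
     = B (f y) (frechet_derivative g (at y) v) + B (frechet_derivative f (at y) v) (g y)"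
proof -
  have D: "((\<lambda>y. B (f y) (g y)) has_derivative (\<lambda>h. B (f y) (frechet_derivative g (at y) h) + B (frechet_derivative f (at y) h) (g y))) (at y)"
  proof -
    have f': "(f has_derivative frechet_derivative f (at y)) (at y)" using assms(2) frechet_derivative_works by blast
    have g': "(g has_derivative frechet_derivative g (at y)) (at y)" using assms(3) frechet_derivative_works by blast
    show ?thesis using bounded_bilinear.FDERIV[OF B f' g'] .
  qed
  show ?thesis by (subst frechet_derivative_at[OF D, symmetric]) simp
qed

lemma Cn_prod:
  fixes S :: "'a::real_normed_vector set" and f :: "'a \<Rightarrow> 'b::real_normed_vector"
    and g :: "'a \<Rightarrow> 'c::real_normed_vector" and B :: "'b \<Rightarrow> 'c \<Rightarrow> 'd::real_normed_vector"
  assumes B: "bounded_bilinear B" and S: "open S"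
  shows "Cn n S f \<Longrightarrow> Cn n S g \<Longrightarrow> Cn n S (\<lambda>y. B (f y) (g y))"
proof (induction n arbitrary: f g)
  case 0
  show ?case unfolding Cn_0 differentiable_on_eq_differentiable_at[OF S]
  proof
    fix x assume x: "x \<in> S"
    have "(f has_derivative frechet_derivative f (at x)) (at x)" "(g has_derivative frechet_derivative g (at x)) (at x)"
      using fd_at_open[OF S _ x] 0 Cn_0 by blast+
    from bounded_bilinear.FDERIV[OF B this(1) this(2)]
    show "(\<lambda>y. B (f y) (g y)) differentiable at x" unfolding differentiable_def by blast
  qed
next
  case (Suc n)
  have fd: "f differentiable_on S" and df: "\<And>v. Cn n S (dd f v)" using Suc.prems Cn_Suc by blast+
  have gd: "g differentiable_on S" and dg: "\<And>v. Cn n S (dd g v)" using Suc.prems Cn_Suc by blast+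
  have fn: "Cn n S f" "Cn n S g" using Suc.prems Cn_mono by fastforce+
  have "(\<lambda>y. B (f y) (g y)) differentiable_on S" using Suc.IH[OF fn] Cn_0 Cn_mono by blast
  moreover have "Cn n S (dd (\<lambda>y. B (f y) (g y)) v)" for v
  proof (rule Cn_cong[OF S _ Cn_add[OF S Suc.IH[OF fn(1) dg[of v]] Suc.IH[OF df[of v] fn(2)]]])
    fix y assume y: "y \<in> S"
    show "B (f y) (dd g v y) + B (dd f v y) (g y) = dd (\<lambda>y. B (f y) (g y)) v y"
      using dd_prod[OF B diff_open_at[OF S fd y] diff_open_at[OF S gd y]] by simp
  qed
  ultimately show ?case using Cn_Suc by blast
qed



lemma comp_has_derivative:
  fixes u :: "'a::real_normed_vector \<Rightarrow> 'b::real_normed_vector" and f :: "'b \<Rightarrow> 'c::real_normed_vector"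
  assumes U: "open U" and W: "open W" and uW: "u ` U \<subseteq> W"
    and ud: "u differentiable_on U" and fdf: "f differentiable_on W" and y: "y \<in> U"
  shows "((\<lambda>y. f (u y)) has_derivative (\<lambda>h. frechet_derivative f (at (u y)) (frechet_derivative u (at y) h))) (at y)"
proof -
  have "u y \<in> W" using uW y by blast
  from diff_chain_at[OF fd_at_open[OF U ud y] fd_at_open[OF W fdf this]]
  show ?thesis by (simp add: o_def)
qed

lemma linear_basis_expand:
  fixes L :: "'b::euclidean_space \<Rightarrow> 'c::real_normed_vector"
  assumes "linear L"
  shows "L w = (\<Sum>b\<in>Basis. (w \<bullet> b) *\<^sub>R L b)"
proof -
  have "L w = L (\<Sum>b\<in>Basis. (w \<bullet> b) *\<^sub>R b)" by (simp add: euclidean_representation)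
  also have "\<dots> = (\<Sum>b\<in>Basis. L ((w \<bullet> b) *\<^sub>R b))" using linear_sum[OF assms] by blast
  also have "\<dots> = (\<Sum>b\<in>Basis. (w \<bullet> b) *\<^sub>R L b)" using linear_scale[OF assms] by simp
  finally show ?thesis .
qed

lemma Cn_compose:
  fixes u :: "'a::real_normed_vector \<Rightarrow> 'b::euclidean_space" and f :: "'b \<Rightarrow> 'c::real_normed_vector"
  assumes U: "open U" and W: "open W" and uW: "u ` U \<subseteq> W" and su: "smooth_on U u"
  shows "smooth_on W f \<Longrightarrow> Cn n U (\<lambda>y. f (u y))"
proof (induction n arbitrary: f)
  case 0
  have "(\<lambda>y. f (u y)) differentiable_on U"
    unfolding differentiable_on_eq_differentiable_at[OF U] differentiable_def
    using comp_has_derivative[OF U W uW smooth_diff[OF su] smooth_diff[OF 0]] by blast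
  then show ?case using Cn_0 by blast
next
  case (Suc n)
  have fdf: "f differentiable_on W" using smooth_diff[OF Suc.prems] .
  have ud: "u differentiable_on U" using smooth_diff[OF su] .
  have "(\<lambda>y. f (u y)) differentiable_on U"
    unfolding differentiable_on_eq_differentiable_at[OF U] differentiable_def
    using comp_has_derivative[OF U W uW ud fdf] by blast
  moreover have "Cn n U (dd (\<lambda>y. f (u y)) v)" for v
  proof (rule Cn_cong[OF U])
    show "Cn n U (\<lambda>y. \<Sum>b\<in>Basis. (dd u v y \<bullet> b) *\<^sub>R dd f b (u y))"
    proof (rule Cn_sum[OF U finite_Basis])
      fix b :: 'b assume "b \<in> Basis"
      have c1: "Cn n U (\<lambda>y. dd u v y \<bullet> b)"
        using Cn_linear[OF bounded_linear_inner_left U] smooth_dd[OF su] smooth_Cn by blast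
      have c2: "Cn n U (\<lambda>y. dd f b (u y))"
        using Suc.IH smooth_dd[OF Suc.prems] by blast
      show "Cn n U (\<lambda>y. (dd u v y \<bullet> b) *\<^sub>R dd f b (u y))"
        using Cn_prod[OF bounded_bilinear_scaleR U c1 c2] .
    qed
  next
    fix y assume y: "y \<in> U"
    have uyW: "u y \<in> W" using uW y by blast
    have D: "((\<lambda>y. f (u y)) has_derivative (\<lambda>h. frechet_derivative f (at (u y)) (frechet_derivative u (at y) h))) (at y)"
      using comp_has_derivative[OF U W uW ud fdf y] .
    have lin: "linear (frechet_derivative f (at (u y)))"
      using linear_frechet_derivative diff_open_at[OF W fdf uyW] by blast
    have "dd (\<lambda>y. f (u y)) v y = frechet_derivative f (at (u y)) (frechet_derivative u (at y) v)"
      by (subst frechet_derivative_at[OF D, symmetric]) simp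
    also have "\<dots> = (\<Sum>b\<in>Basis. (dd u v y \<bullet> b) *\<^sub>R dd f b (u y))"
      using linear_basis_expand[OF lin] by blast
    finally show "(\<Sum>b\<in>Basis. (dd u v y \<bullet> b) *\<^sub>R dd f b (u y)) = dd (\<lambda>y. f (u y)) v y" by simp
  qed
  ultimately show ?case using Cn_Suc by blast
qed

lemma smooth_compose:
  fixes u :: "'a::real_normed_vector \<Rightarrow> 'b::euclidean_space" and f :: "'b \<Rightarrow> 'c::real_normed_vector"
  assumes "open U" "open W" "u ` U \<subseteq> W" "smooth_on U u" "smooth_on W f"
  shows "smooth_on U (\<lambda>y. f (u y))"
  using Cn_compose[OF assms(1-4) assms(5)] smooth_Cn by blast

lemma hderiv_prod_flat:
  fixes S :: "'a::real_normed_vector set" and f :: "'a \<Rightarrow> 'b::real_normed_vector"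
    and g :: "'a \<Rightarrow> 'c::real_normed_vector" and B :: "'b \<Rightarrow> 'c \<Rightarrow> 'd::real_normed_vector"
  assumes B: "bounded_bilinear B" and S: "open S" and x: "x \<in> S"
  shows "Cn k S f \<Longrightarrow> Cn k S g \<Longrightarrow> (\<forall>i<k. \<forall>ws. length ws = i \<longrightarrow> hderiv i g x ws = 0) \<Longrightarrow>
    length vs = k \<Longrightarrow> hderiv k (\<lambda>y. B (f y) (g y)) x vs = B (f x) (hderiv k g x vs)"
proof (induction k arbitrary: f g vs)
  case 0
  then show ?case by simp
next
  case (Suc k)
  obtain ws v where vs: "vs = ws @ [v]" using Suc.prems(4) by (metis length_Suc_conv_rev)
  have ws: "length ws = k" using vs Suc.prems(4) by simp
  have fd: "f differentiable_on S" and df: "Cn k S (dd f v)" using Suc.prems(1) Cn_Suc by blast+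
  have gd: "g differentiable_on S" and dg: "Cn k S (dd g v)" using Suc.prems(2) Cn_Suc by blast+
  have fk: "Cn k S f" "Cn k S g" using Suc.prems Cn_mono le_SucI by blast+
  have flatg: "\<forall>i<k. \<forall>ws. length ws = i \<longrightarrow> hderiv i g x ws = 0" using Suc.prems(3) by auto
  have flatdg: "\<forall>i<k. \<forall>ws. length ws = i \<longrightarrow> hderiv i (dd g v) x ws = 0"
  proof (intro allI impI)
    fix i and ws' :: "'a list" assume "i < k" "length ws' = i"
    then have "hderiv (Suc i) g x (ws' @ [v]) = 0" using Suc.prems(3) by auto
    moreover have "hderiv i (dd g v) x ws' = hderiv (Suc i) g x (ws' @ [v])"
      by (rule hderiv_snoc[OF \<open>length ws' = i\<close>, symmetric])
    ultimately show "hderiv i (dd g v) x ws' = 0" by simp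
  qed
  have "hderiv (Suc k) (\<lambda>y. B (f y) (g y)) x vs = hderiv k (dd (\<lambda>y. B (f y) (g y)) v) x ws"
    unfolding vs by (rule hderiv_snoc[OF ws])
  also have "\<dots> = hderiv k (\<lambda>y. B (f y) (dd g v y) + B (dd f v y) (g y)) x ws"
  proof (rule hderiv_cong[OF S x])
    fix y assume y: "y \<in> S"
    show "dd (\<lambda>y. B (f y) (g y)) v y = B (f y) (dd g v y) + B (dd f v y) (g y)"
      using dd_prod[OF B diff_open_at[OF S fd y] diff_open_at[OF S gd y]] by simp
  qed
  also have "\<dots> = hderiv k (\<lambda>y. B (f y) (dd g v y)) x ws + hderiv k (\<lambda>y. B (dd f v y) (g y)) x ws"
    by (rule hderiv_add[OF S Cn_prod[OF B S fk(1) dg] Cn_prod[OF B S df fk(2)] x ws])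
  also have "\<dots> = B (f x) (hderiv k (dd g v) x ws) + B (dd f v x) (hderiv k g x ws)"
    using Suc.IH[OF fk(1) dg flatdg ws] Suc.IH[OF df fk(2) flatg ws] by simp
  also have "\<dots> = B (f x) (hderiv (Suc k) g x vs)"
  proof -
    have z: "hderiv k g x ws = 0" using Suc.prems(3) ws by auto
    have s: "hderiv k (dd g v) x ws = hderiv (Suc k) g x vs"
      unfolding vs by (rule hderiv_snoc[OF ws, symmetric])
    show ?thesis by (simp add: z s bounded_bilinear.zero_right[OF B])
  qed
  finally show ?case .
qed



lemma mvt_bound:
  fixes f :: "real \<Rightarrow> 'b::real_inner"
  assumes t: "0 < t"
    and der: "\<And>s. s \<in> {0..t} \<Longrightarrow> (f has_derivative (\<lambda>h. h *\<^sub>R f' s)) (at s)"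
    and bnd: "\<And>s. s \<in> {0..t} \<Longrightarrow> norm (f' s) \<le> M"
  shows "norm (f t - f 0) \<le> t * M"
proof -
  have "continuous_on {0..t} f"
    using der has_derivative_continuous continuous_at_imp_continuous_on by blast
  moreover have "\<And>s. 0 < s \<Longrightarrow> s < t \<Longrightarrow> (f has_derivative (\<lambda>h. h *\<^sub>R f' s)) (at s)"
    using der by auto
  ultimately obtain s where s: "s \<in> {0<..<t}" "norm (f t - f 0) \<le> norm ((t - 0) *\<^sub>R f' s)"
    using mvt_general[OF t, of f "\<lambda>s h. h *\<^sub>R f' s"] by blast
  have "norm ((t - 0) *\<^sub>R f' s) = t * norm (f' s)" using t by simp
  also have "\<dots> \<le> t * M" using bnd[of s] s(1) t by (intro mult_left_mono) auto
  finally show ?thesis using s(2) by linarith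
qed

lemma schwarz_aux:
  fixes G :: "'a::real_normed_vector \<Rightarrow> 'b::real_inner"
  assumes d: "0 < d"
    and DG: "\<And>y. y \<in> ball x d \<Longrightarrow> (G has_derivative DG y) (at y)"
    and DK: "\<And>y. y \<in> ball x d \<Longrightarrow> ((\<lambda>z. DG z a) has_derivative DK y) (at y)"
    and bnd: "\<And>y. y \<in> ball x d \<Longrightarrow> norm (DK y b - c) \<le> e"
    and t: "0 < t" "t * (norm a + norm b) < d"
  shows "norm (G (x + t *\<^sub>R a + t *\<^sub>R b) - G (x + t *\<^sub>R a) - G (x + t *\<^sub>R b) + G x - (t*t) *\<^sub>R c) \<le> e * (t*t)"
proof -
  define P where "P s r = x + s *\<^sub>R a + r *\<^sub>R b" for s r
  have inball: "P s r \<in> ball x d" if "s \<in> {0..t}" "r \<in> {0..t}" for s r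
  proof -
    have "x - P s r = - (s *\<^sub>R a + r *\<^sub>R b)" by (simp add: P_def)
    then have "dist x (P s r) = norm (s *\<^sub>R a + r *\<^sub>R b)"
      by (simp only: dist_norm norm_minus_cancel)
    also have "\<dots> \<le> norm (s *\<^sub>R a) + norm (r *\<^sub>R b)" by (rule norm_triangle_ineq)
    also have "\<dots> = s * norm a + r * norm b" using that by simp
    also have "\<dots> \<le> t * norm a + t * norm b"
      using that by (intro add_mono mult_right_mono) auto
    also have "\<dots> < d" using t(2) by (simp add: distrib_left)
    finally show ?thesis by simp
  qed
  have Pr: "((\<lambda>r. P s r) has_derivative (\<lambda>h. h *\<^sub>R b)) (at r)" for s r
    unfolding P_def by (auto intro!: derivative_eq_intros)
  have Ps: "((\<lambda>s. P s r) has_derivative (\<lambda>h. h *\<^sub>R a)) (at s)" for s r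
    unfolding P_def by (auto intro!: derivative_eq_intros)
  have A: "norm (DG (P s t) a - DG (P s 0) a - t *\<^sub>R c) \<le> t * e" if s: "s \<in> {0..t}" for s
  proof -
    define chi where "chi r = DG (P s r) a - r *\<^sub>R c" for r
    have "(chi has_derivative (\<lambda>h. h *\<^sub>R (DK (P s r) b - c))) (at r)" if r: "r \<in> {0..t}" for r
    proof -
      have dk: "((\<lambda>z. DG z a) has_derivative DK (P s r)) (at (P s r))" using DK inball[OF s r] by blast
      have lin: "linear (DK (P s r))" using has_derivative_linear[OF dk] .
      have "(((\<lambda>z. DG z a) \<circ> (\<lambda>r. P s r)) has_derivative (DK (P s r) \<circ> (\<lambda>h. h *\<^sub>R b))) (at r)"
        by (rule diff_chain_at[OF Pr dk])
      then have "((\<lambda>r. DG (P s r) a) has_derivative (\<lambda>h. h *\<^sub>R DK (P s r) b)) (at r)"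
        using linear_scale[OF lin] by (simp add: o_def)
      then have "((\<lambda>r. DG (P s r) a - r *\<^sub>R c) has_derivative (\<lambda>h. h *\<^sub>R DK (P s r) b - h *\<^sub>R c)) (at r)"
        by (auto intro!: derivative_eq_intros)
      then show ?thesis unfolding chi_def by (simp add: scaleR_diff_right)
    qed
    then have "norm (chi t - chi 0) \<le> t * e"
      using mvt_bound[OF t(1), of chi "\<lambda>r. DK (P s r) b - c" e] bnd inball[OF s] by blast
    then show ?thesis unfolding chi_def by (simp add: algebra_simps)
  qed
  define phi where "phi s = G (P s t) - G (P s 0) - s *\<^sub>R (t *\<^sub>R c)" for s
  have "(phi has_derivative (\<lambda>h. h *\<^sub>R (DG (P s t) a - DG (P s 0) a - t *\<^sub>R c))) (at s)" if s: "s \<in> {0..t}" for s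
  proof -
    have t0: "t \<in> {0..t}" "0 \<in> {0..t}" using t by auto
    have d1: "(G has_derivative DG (P s t)) (at (P s t))" using DG inball[OF s t0(1)] by blast
    have d2: "(G has_derivative DG (P s 0)) (at (P s 0))" using DG inball[OF s t0(2)] by blast
    have l1: "linear (DG (P s t))" using has_derivative_linear[OF d1] .
    have l2: "linear (DG (P s 0))" using has_derivative_linear[OF d2] .
    have "((G \<circ> (\<lambda>s. P s t)) has_derivative (DG (P s t) \<circ> (\<lambda>h. h *\<^sub>R a))) (at s)"
      by (rule diff_chain_at[OF Ps d1])
    then have e1: "((\<lambda>s. G (P s t)) has_derivative (\<lambda>h. h *\<^sub>R DG (P s t) a)) (at s)"
      using linear_scale[OF l1] by (simp add: o_def)
    have "((G \<circ> (\<lambda>s. P s 0)) has_derivative (DG (P s 0) \<circ> (\<lambda>h. h *\<^sub>R a))) (at s)"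
      by (rule diff_chain_at[OF Ps d2])
    then have e2: "((\<lambda>s. G (P s 0)) has_derivative (\<lambda>h. h *\<^sub>R DG (P s 0) a)) (at s)"
      using linear_scale[OF l2] by (simp add: o_def)
    have "((\<lambda>s. G (P s t) - G (P s 0) - s *\<^sub>R (t *\<^sub>R c)) has_derivative
        (\<lambda>h. h *\<^sub>R DG (P s t) a - h *\<^sub>R DG (P s 0) a - h *\<^sub>R (t *\<^sub>R c))) (at s)"
      using e1 e2 by (auto intro!: derivative_eq_intros)
    then show ?thesis unfolding phi_def by (simp add: scaleR_diff_right)
  qed
  then have "norm (phi t - phi 0) \<le> t * (t * e)"
    using mvt_bound[OF t(1), of phi "\<lambda>s. DG (P s t) a - DG (P s 0) a - t *\<^sub>R c" "t * e"] A by blast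
  moreover have "phi t - phi 0 = G (x + t *\<^sub>R a + t *\<^sub>R b) - G (x + t *\<^sub>R a) - G (x + t *\<^sub>R b) + G x - (t*t) *\<^sub>R c"
    unfolding phi_def P_def by (simp add: algebra_simps)
  ultimately show ?thesis by (simp add: algebra_simps)
qed

lemma schwarz:
  fixes G :: "'a::real_normed_vector \<Rightarrow> 'b::real_inner"
  assumes S: "open S" and x: "x \<in> S" and Gd: "G differentiable_on S"
    and Ka: "dd G a differentiable_on S" and Kb: "dd G b differentiable_on S"
    and ca: "isCont (\<lambda>y. frechet_derivative (dd G a) (at y) b) x"
    and cb: "isCont (\<lambda>y. frechet_derivative (dd G b) (at y) a) x"
  shows "frechet_derivative (dd G a) (at x) b = frechet_derivative (dd G b) (at x) a"
proof (rule ccontr)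
  define c1 where "c1 = frechet_derivative (dd G a) (at x) b"
  define c2 where "c2 = frechet_derivative (dd G b) (at x) a"
  assume "c1 \<noteq> c2"
  define e where "e = norm (c1 - c2) / 4"
  have e: "e > 0" using \<open>c1 \<noteq> c2\<close> by (simp add: e_def)
  obtain d1 where d1: "d1 > 0" "\<And>y. dist y x < d1 \<Longrightarrow> dist (frechet_derivative (dd G a) (at y) b) c1 < e"
    using ca e unfolding continuous_at_eps_delta c1_def by blast
  obtain d2 where d2: "d2 > 0" "\<And>y. dist y x < d2 \<Longrightarrow> dist (frechet_derivative (dd G b) (at y) a) c2 < e"
    using cb e unfolding continuous_at_eps_delta c2_def by blast
  obtain d0 where d0: "d0 > 0" "ball x d0 \<subseteq> S" using S x open_contains_ball by blast
  define d where "d = min d0 (min d1 d2)"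
  have d: "d > 0" using d0 d1 d2 by (simp add: d_def)
  have yS: "y \<in> S" and yd1: "dist y x < d1" and yd2: "dist y x < d2" if "y \<in> ball x d" for y
    using that d0 by (auto simp: d_def dist_commute)
  define t where "t = d / (2 * (norm a + norm b + 1))"
  have pos: "norm a + norm b + 1 > 0" by (simp add: add_nonneg_pos)
  have t: "t > 0" using d pos by (simp add: t_def)
  have "t * (norm a + norm b) \<le> t * (norm a + norm b + 1)" using t by simp
  also have "\<dots> = d / 2" unfolding t_def using pos by (auto simp: field_simps)
  also have "\<dots> < d" using d by simp
  finally have td: "t * (norm a + norm b) < d" .
  have tdb: "t * (norm b + norm a) < d" using td by (simp add: add.commute)
  have DG: "(G has_derivative frechet_derivative G (at y)) (at y)" if "y \<in> ball x d" for y
    using fd_at_open[OF S Gd yS[OF that]] .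
  have DKa: "(dd G a has_derivative frechet_derivative (dd G a) (at y)) (at y)" if "y \<in> ball x d" for y
    using fd_at_open[OF S Ka yS[OF that]] .
  have DKb: "(dd G b has_derivative frechet_derivative (dd G b) (at y)) (at y)" if "y \<in> ball x d" for y
    using fd_at_open[OF S Kb yS[OF that]] .
  have b1: "norm (frechet_derivative (dd G a) (at y) b - c1) \<le> e" if "y \<in> ball x d" for y
    using d1(2)[OF yd1[OF that]] by (simp add: dist_norm)
  have b2: "norm (frechet_derivative (dd G b) (at y) a - c2) \<le> e" if "y \<in> ball x d" for y
    using d2(2)[OF yd2[OF that]] by (simp add: dist_norm)
  define \<Delta> where "\<Delta> = G (x + t *\<^sub>R a + t *\<^sub>R b) - G (x + t *\<^sub>R a) - G (x + t *\<^sub>R b) + G x"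
  have n1: "norm (\<Delta> - (t*t) *\<^sub>R c1) \<le> e * (t*t)"
    using schwarz_aux[OF d DG DKa b1 t td] unfolding \<Delta>_def by simp
  have n2': "norm (G (x + t *\<^sub>R b + t *\<^sub>R a) - G (x + t *\<^sub>R b) - G (x + t *\<^sub>R a) + G x - (t*t) *\<^sub>R c2) \<le> e * (t*t)"
    using schwarz_aux[OF d DG DKb b2 t tdb] by simp
  have "x + t *\<^sub>R b + t *\<^sub>R a = x + t *\<^sub>R a + t *\<^sub>R b" by (simp add: algebra_simps)
  then have n2: "norm (\<Delta> - (t*t) *\<^sub>R c2) \<le> e * (t*t)"
    using n2' unfolding \<Delta>_def by (simp add: algebra_simps)
  have "(t*t) *\<^sub>R (c1 - c2) = (\<Delta> - (t*t) *\<^sub>R c2) - (\<Delta> - (t*t) *\<^sub>R c1)" by (simp add: algebra_simps)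
  then have "norm ((t*t) *\<^sub>R (c1 - c2)) \<le> norm (\<Delta> - (t*t) *\<^sub>R c2) + norm (\<Delta> - (t*t) *\<^sub>R c1)"
    by (metis norm_triangle_ineq4)
  also have "\<dots> \<le> 2 * e * (t*t)" using n1 n2 by simp
  finally have A: "norm ((t*t) *\<^sub>R (c1 - c2)) \<le> 2 * e * (t*t)" .
  have tt: "norm ((t*t) *\<^sub>R (c1 - c2)) = (t*t) * norm (c1 - c2)" using t by simp
  have "(t*t) * norm (c1 - c2) \<le> (t*t) * (2 * e)" using A unfolding tt by (simp add: mult_ac)
  moreover have "t * t > 0" using t by simp
  ultimately have "norm (c1 - c2) \<le> 2 * e" by (rule mult_left_le_imp_le)
  then show False using e unfolding e_def by simp
qed



lemma hderiv_swap:
  fixes f :: "'a::real_normed_vector \<Rightarrow> 'b::real_inner"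
  assumes S: "open S" and sm: "smooth_on S f" and x: "x \<in> S" and rest: "length rest = m"
  shows "hderiv (Suc (Suc m)) f x (a # b # rest) = hderiv (Suc (Suc m)) f x (b # a # rest)"
proof -
  define G where "G = (\<lambda>z. hderiv m f z rest)"
  have Gd: "G differentiable_on S" using sm rest unfolding smooth_on_def G_def by blast
  have ea: "dd G a = (\<lambda>y. hderiv (Suc m) f y (a # rest))" by (simp add: G_def)
  have eb: "dd G b = (\<lambda>y. hderiv (Suc m) f y (b # rest))" by (simp add: G_def)
  have Ka: "dd G a differentiable_on S"
  proof -
    have "(\<lambda>y. hderiv (length (a # rest)) f y (a # rest)) differentiable_on S"
      using sm unfolding smooth_on_def by blast
    then show ?thesis using rest by (simp add: G_def)
  qed
  have Kb: "dd G b differentiable_on S"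
  proof -
    have "(\<lambda>y. hderiv (length (b # rest)) f y (b # rest)) differentiable_on S"
      using sm unfolding smooth_on_def by blast
    then show ?thesis using rest by (simp add: G_def)
  qed
  have eab: "(\<lambda>y. frechet_derivative (dd G a) (at y) b) = (\<lambda>y. hderiv (Suc (Suc m)) f y (b # a # rest))"
    by (simp add: G_def)
  have eba: "(\<lambda>y. frechet_derivative (dd G b) (at y) a) = (\<lambda>y. hderiv (Suc (Suc m)) f y (a # b # rest))"
    by (simp add: G_def)
  have c1: "(\<lambda>y. hderiv (Suc (Suc m)) f y (b # a # rest)) differentiable_on S"
  proof -
    have "(\<lambda>y. hderiv (length (b # a # rest)) f y (b # a # rest)) differentiable_on S"
      using sm unfolding smooth_on_def by blast
    then show ?thesis using rest by simp
  qed
  have c2: "(\<lambda>y. hderiv (Suc (Suc m)) f y (a # b # rest)) differentiable_on S"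
  proof -
    have "(\<lambda>y. hderiv (length (a # b # rest)) f y (a # b # rest)) differentiable_on S"
      using sm unfolding smooth_on_def by blast
    then show ?thesis using rest by simp
  qed
  have ca: "isCont (\<lambda>y. frechet_derivative (dd G a) (at y) b) x"
    unfolding eab using differentiable_imp_continuous_on[OF c1] continuous_on_eq_continuous_at[OF S] x by blast
  have cb: "isCont (\<lambda>y. frechet_derivative (dd G b) (at y) a) x"
    unfolding eba using differentiable_imp_continuous_on[OF c2] continuous_on_eq_continuous_at[OF S] x by blast
  have "frechet_derivative (dd G a) (at x) b = frechet_derivative (dd G b) (at x) a"
    by (rule schwarz[OF S x Gd Ka Kb ca cb])
  then show ?thesis using fun_cong[OF eab, of x] fun_cong[OF eba, of x] by simp
qed

lemma hderiv_perm:
  fixes f :: "'a::real_normed_vector \<Rightarrow> 'b::real_inner"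
  assumes S: "open S" and sm: "smooth_on S f"
  shows "length vs = l \<Longrightarrow> mset vs = mset ws \<Longrightarrow> x \<in> S \<Longrightarrow> hderiv l f x vs = hderiv l f x ws"
proof (induction l arbitrary: x vs ws)
  case 0
  then show ?case by simp
next
  case (Suc l)
  have T: "hderiv (Suc l) f x (c # ys) = hderiv (Suc l) f x (c # zs)"
    if "mset ys = mset zs" "length ys = l" for c ys zs
  proof -
    have "frechet_derivative (\<lambda>y. hderiv l f y ys) (at x) = frechet_derivative (\<lambda>y. hderiv l f y zs) (at x)"
      by (rule fd_cong[OF S Suc.prems(3)]) (rule Suc.IH[OF that(2) that(1)])
    then show ?thesis by simp
  qed
  obtain a vs' where vs: "vs = a # vs'" "length vs' = l" using Suc.prems(1) by (metis length_Suc_conv)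
  have "length ws = Suc l" using Suc.prems(1,2) by (metis size_mset)
  then obtain b ws' where ws: "ws = b # ws'" by (metis length_Suc_conv)
  have eq: "add_mset a (mset vs') = add_mset b (mset ws')" using Suc.prems(2) vs ws by simp
  show ?case
  proof (cases "a = b")
    case True
    then have "mset vs' = mset ws'" using eq by simp
    then show ?thesis using T vs ws True by simp
  next
    case False
    have bin: "b \<in> set vs'" using eq False
      by (metis insert_noteq_member set_mset_mset)
    define rest where "rest = remove1 b vs'"
    have m1: "mset vs' = mset (b # rest)" using bin by (simp add: rest_def)
    have lr: "length vs' = Suc (length rest)" using m1 by (metis size_mset length_Cons)
    have m2: "mset (a # rest) = mset ws'"
    proof -
      have "add_mset b (add_mset a (mset rest)) = add_mset b (mset ws')" using eq m1 by simp
      then show ?thesis by simp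
    qed
    have "hderiv (Suc l) f x vs = hderiv (Suc l) f x (a # b # rest)" using T[OF m1 vs(2)] vs by simp
    also have "\<dots> = hderiv (Suc l) f x (b # a # rest)"
      using hderiv_swap[OF S sm Suc.prems(3), of rest "length rest" a b] lr vs(2) by simp
    also have "\<dots> = hderiv (Suc l) f x ws"
      using T[OF m2] lr vs(2) ws by simp
    finally show ?thesis .
  qed
qed



theorem lemma2p2:
  fixes U :: "complex set" and W :: "'m::euclidean_space set"
    and j :: "complex \<Rightarrow> complex \<Rightarrow> complex" and J :: "'m \<Rightarrow> 'm \<Rightarrow> 'm"
    and u :: "complex \<Rightarrow> 'm" and z0 :: complex and k :: nat
  assumes "open U" and "open W"
    and "almost_complex_structure U j" and "almost_complex_structure W J"
    and "u ` U \<subseteq> W" and "smooth_on U u"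
    and "jJ_holomorphic U j J u"
    and "z0 \<in> U" and "jet_vanishes k u z0"
  shows "jet_vanishes (k + 1) u z0 \<longleftrightarrow>
         (\<forall>vs. length vs = k + 1 \<longrightarrow> principal_hol_jet (k + 1) J j u z0 vs = 0)"
proof -
  note U = assms(1) and W = assms(2) and uW = assms(5) and su = assms(6) and z0 = assms(8)
  have Jlin: "linear (J x)" and JJ: "J x (J x v) = - v" if "x \<in> W" for x v
    using assms(4) that unfolding almost_complex_structure_def by auto
  have Jsm: "smooth_on W (\<lambda>x. J x v)" for v
    using assms(4) unfolding almost_complex_structure_def by auto
  have jsm: "smooth_on U (\<lambda>z. j z v)" for v
    using assms(3) unfolding almost_complex_structure_def by auto
  have holo: "J (u z) (frechet_derivative u (at z) v) = frechet_derivative u (at z) (j z v)" if "z \<in> U" for z v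
    using assms(7) that unfolding jJ_holomorphic_def by auto
  have jet: "hderiv l u z0 vs = 0" if "1 \<le> l" "l \<le> k" "length vs = l" for l vs
    using assms(9) that unfolding jet_vanishes_def by auto
  have ud: "u differentiable_on U" using smooth_diff[OF su] .
  have ulin: "linear (frechet_derivative u (at z))" if "z \<in> U" for z
    using linear_frechet_derivative diff_open_at[OF U ud that] by blast
  have uz0W: "u z0 \<in> W" using uW z0 by blast
  define A where "A = hderiv (Suc k) u z0"
  define Jx where "Jx = J (u z0)"
  define jz where "jz = j z0"
  have Cdu: "Cn n U (dd u v)" for n v using smooth_dd[OF su] smooth_Cn by blast
  have flat_du: "\<forall>i<k. \<forall>ws'. length ws' = i \<longrightarrow> hderiv i (dd u v) z0 ws' = 0" for v
  proof (intro allI impI)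
    fix i and ws' :: "complex list" assume i: "i < k" "length ws' = i"
    have "hderiv i (dd u v) z0 ws' = hderiv (Suc i) u z0 (ws' @ [v])"
      by (rule hderiv_snoc[OF i(2), symmetric])
    also have "\<dots> = 0" using jet[of "Suc i" "ws' @ [v]"] i by simp
    finally show "hderiv i (dd u v) z0 ws' = 0" .
  qed
  have A_snoc: "A (ws @ [v]) = hderiv k (dd u v) z0 ws" if "length ws = k" for ws v
    unfolding A_def by (rule hderiv_snoc[OF that])
  have key: "A (ws @ [jz w]) = Jx (A (ws @ [w]))" if ws: "length ws = k" for ws w
  proof -
    define F where "F z = frechet_derivative u (at z) (j z w)" for z
    have Fa: "F z = (\<Sum>b\<in>Basis. (dd u w z \<bullet> b) *\<^sub>R J (u z) b)" if "z \<in> U" for z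
    proof -
      have "u z \<in> W" using uW that by blast
      then have "F z = J (u z) (dd u w z)" using holo[OF that] by (simp add: F_def)
      also have "\<dots> = (\<Sum>b\<in>Basis. (dd u w z \<bullet> b) *\<^sub>R J (u z) b)"
        by (rule linear_basis_expand[OF Jlin[OF \<open>u z \<in> W\<close>]])
      finally show ?thesis .
    qed
    have Fb: "F z = (\<Sum>b\<in>Basis. (j z w \<bullet> b) *\<^sub>R dd u b z)" if "z \<in> U" for z
      unfolding F_def by (rule linear_basis_expand[OF ulin[OF that]])
    have Ga: "dd u (jz w) z = (\<Sum>b\<in>Basis. (jz w \<bullet> b) *\<^sub>R dd u b z)" if "z \<in> U" for z
      by (rule linear_basis_expand[OF ulin[OF that]])
    have CM: "Cn k U (\<lambda>z. J (u z) b)" for b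
      using smooth_compose[OF U W uW su Jsm[of b]] smooth_Cn by blast
    have Cc: "Cn k U (\<lambda>z. dd u w z \<bullet> b)" for b
      using Cn_linear[OF bounded_linear_inner_left U Cdu] .
    have hc: "hderiv i (\<lambda>z. dd u w z \<bullet> b) z0 ws' = hderiv i (dd u w) z0 ws' \<bullet> b"
      if "length ws' = i" for i ws' b
      using hderiv_linear[OF bounded_linear_inner_left U Cdu z0 that] .
    have flat_c: "\<forall>i<k. \<forall>ws'. length ws' = i \<longrightarrow> hderiv i (\<lambda>z. dd u w z \<bullet> b) z0 ws' = 0" for b
      using hc flat_du by simp
    have "hderiv k F z0 ws = hderiv k (\<lambda>z. \<Sum>b\<in>Basis. (dd u w z \<bullet> b) *\<^sub>R J (u z) b) z0 ws"
      by (rule hderiv_cong[OF U z0 Fa])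
    also have "\<dots> = (\<Sum>b\<in>Basis. hderiv k (\<lambda>z. (dd u w z \<bullet> b) *\<^sub>R J (u z) b) z0 ws)"
      by (rule hderiv_sum[OF U finite_Basis _ z0 ws])
         (rule Cn_prod[OF bounded_bilinear_scaleR U Cc CM])
    also have "\<dots> = (\<Sum>b\<in>Basis. (hderiv k (\<lambda>z. dd u w z \<bullet> b) z0 ws) *\<^sub>R J (u z0) b)"
    proof (rule sum.cong[OF refl])
      fix b :: 'm
      show "hderiv k (\<lambda>z. (dd u w z \<bullet> b) *\<^sub>R J (u z) b) z0 ws = (hderiv k (\<lambda>z. dd u w z \<bullet> b) z0 ws) *\<^sub>R J (u z0) b"
        using hderiv_prod_flat[OF bounded_bilinear.flip[OF bounded_bilinear_scaleR] U z0 CM Cc flat_c ws] by simp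
    qed
    also have "\<dots> = (\<Sum>b\<in>Basis. (A (ws @ [w]) \<bullet> b) *\<^sub>R Jx b)"
      using hc[OF ws] A_snoc[OF ws] by (simp add: Jx_def)
    also have "\<dots> = Jx (A (ws @ [w]))"
      by (rule linear_basis_expand[OF Jlin[OF uz0W], symmetric, folded Jx_def])
    finally have E1: "hderiv k F z0 ws = Jx (A (ws @ [w]))" .
    have Cj: "Cn k U (\<lambda>z. j z w \<bullet> b)" for b
      using Cn_linear[OF bounded_linear_inner_left U] jsm smooth_Cn by blast
    have "hderiv k F z0 ws = hderiv k (\<lambda>z. \<Sum>b\<in>Basis. (j z w \<bullet> b) *\<^sub>R dd u b z) z0 ws"
      by (rule hderiv_cong[OF U z0 Fb])
    also have "\<dots> = (\<Sum>b\<in>Basis. hderiv k (\<lambda>z. (j z w \<bullet> b) *\<^sub>R dd u b z) z0 ws)"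
      by (rule hderiv_sum[OF U finite_Basis _ z0 ws])
         (rule Cn_prod[OF bounded_bilinear_scaleR U Cj Cdu])
    also have "\<dots> = (\<Sum>b\<in>Basis. (jz w \<bullet> b) *\<^sub>R hderiv k (dd u b) z0 ws)"
    proof (rule sum.cong[OF refl])
      fix b :: complex
      show "hderiv k (\<lambda>z. (j z w \<bullet> b) *\<^sub>R dd u b z) z0 ws = (jz w \<bullet> b) *\<^sub>R hderiv k (dd u b) z0 ws"
        using hderiv_prod_flat[OF bounded_bilinear_scaleR U z0 Cj Cdu flat_du ws] by (simp add: jz_def)
    qed
    finally have E2: "hderiv k F z0 ws = (\<Sum>b\<in>Basis. (jz w \<bullet> b) *\<^sub>R hderiv k (dd u b) z0 ws)" .
    have "A (ws @ [jz w]) = hderiv k (dd u (jz w)) z0 ws" by (rule A_snoc[OF ws])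
    also have "\<dots> = hderiv k (\<lambda>z. \<Sum>b\<in>Basis. (jz w \<bullet> b) *\<^sub>R dd u b z) z0 ws"
      by (rule hderiv_cong[OF U z0 Ga])
    also have "\<dots> = (\<Sum>b\<in>Basis. hderiv k (\<lambda>z. (jz w \<bullet> b) *\<^sub>R dd u b z) z0 ws)"
      by (rule hderiv_sum[OF U finite_Basis _ z0 ws])
         (rule Cn_linear[OF bounded_linear_scaleR_right U Cdu])
    also have "\<dots> = (\<Sum>b\<in>Basis. (jz w \<bullet> b) *\<^sub>R hderiv k (dd u b) z0 ws)"
      using hderiv_linear[OF bounded_linear_scaleR_right U Cdu z0 ws] by simp
    finally show ?thesis using E1 E2 by simp
  qed
  have allslot: "A (vs[i := jz (vs ! i)]) = Jx (A vs)" if vs: "length vs = Suc k" and i: "i < Suc k" for vs i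
  proof -
    define ws where "ws = take i vs @ drop (Suc i) vs"
    have lws: "length ws = k" using vs i by (simp add: ws_def)
    have m1: "mset vs = mset (ws @ [vs ! i])"
    proof -
      have "vs = take i vs @ vs ! i # drop (Suc i) vs" using i vs by (simp add: id_take_nth_drop)
      then have "mset vs = mset (take i vs @ vs ! i # drop (Suc i) vs)" by simp
      then show ?thesis by (simp add: ws_def)
    qed
    have m2: "mset (vs[i := jz (vs ! i)]) = mset (ws @ [jz (vs ! i)])"
      using i vs by (simp add: ws_def upd_conv_take_nth_drop)
    have l2: "length (vs[i := jz (vs ! i)]) = Suc k" using vs by simp
    have p1: "A vs = A (ws @ [vs ! i])"
      unfolding A_def by (rule hderiv_perm[OF U su vs m1 z0])
    have p2: "A (vs[i := jz (vs ! i)]) = A (ws @ [jz (vs ! i)])"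
      unfolding A_def by (rule hderiv_perm[OF U su l2 m2 z0])
    show ?thesis using p1 p2 key[OF lws] by simp
  qed
  have pih: "pihol_aux Jx jz i A vs = A vs" if "i \<le> Suc k" "length vs = Suc k" for i vs
    using that
  proof (induction i arbitrary: vs)
    case 0
    then show ?case by simp
  next
    case (Suc i)
    have l2: "length (vs[i := jz (vs ! i)]) = Suc k" using Suc.prems by simp
    have "pihol_aux Jx jz (Suc i) A vs
        = (1/2) *\<^sub>R (pihol_aux Jx jz i A vs - Jx (pihol_aux Jx jz i A (vs[i := jz (vs ! i)])))"
      by (simp add: slot_proj_def)
    also have "\<dots> = (1/2) *\<^sub>R (A vs - Jx (A (vs[i := jz (vs ! i)])))"
      using Suc.IH[of vs] Suc.IH[OF _ l2] Suc.prems by simp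
    also have "\<dots> = (1/2) *\<^sub>R (A vs - Jx (Jx (A vs)))"
      using allslot[OF Suc.prems(2)] Suc.prems(1) by simp
    also have "\<dots> = A vs" using JJ[OF uz0W] by (simp add: Jx_def scaleR_2[symmetric])
    finally show ?case .
  qed
  have phj: "principal_hol_jet (k + 1) J j u z0 vs = A vs" if "length vs = k + 1" for vs
    using pih[of "Suc k" vs] that unfolding principal_hol_jet_def pi_hol_def A_def Jx_def jz_def by simp
  have "jet_vanishes (k + 1) u z0 \<longleftrightarrow> (\<forall>vs. length vs = k + 1 \<longrightarrow> A vs = 0)"
  proof
    assume "jet_vanishes (k + 1) u z0"
    then show "\<forall>vs. length vs = k + 1 \<longrightarrow> A vs = 0" unfolding jet_vanishes_def A_def by auto
  next
    assume H: "\<forall>vs. length vs = k + 1 \<longrightarrow> A vs = 0"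
    show "jet_vanishes (k + 1) u z0"
      unfolding jet_vanishes_def
    proof (intro ballI allI impI)
      fix l and vs :: "complex list" assume l: "l \<in> {1..k + 1}" "length vs = l"
      show "hderiv l u z0 vs = 0"
      proof (cases "l = k + 1")
        case True then show ?thesis using H l unfolding A_def by simp
      next
        case False then show ?thesis using jet l by simp
      qed
    qed
  qed
  then show ?thesis using phj by auto
qed


end
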